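(* Let $\mathfrak{g}$ be a Leibniz algebra and $\mathfrak{h}$ a two-sided ideal of $\mathfrak{g}$ with $\mathfrak{h} \subseteq Z_{\mathrm{Lie}}(\mathfrak{g})$. (a) $\mathfrak{g}$ is $\mathrm{Lie}$-nilpotent if and only if $\mathfrak{g}/\mathfrak{h}$ is $\mathrm{Lie}$-nilpotent. (b) If $f:\mathfrak{g}\twoheadrightarrow\mathfrak{q}$ is a $\mathrm{Lie}$-central extension of a Leibniz algebra $\mathfrak{q}$, then $\mathfrak{g}$ is $\mathrm{Lie}$-nilpotent if and only if $\mathfrak{q}$ is $\mathrm{Lie}$-nilpotent.
   Context: Fix a field $\mathbb{K}$ with $\frac12\in\mathbb{K}$. A Leibniz algebra is a $\mathbb{K}$-vector space with a bilinear bracket satisfying $[x,[y,z]]=[[x,y],z]-[[x,z],y]$. For two-sided ideals $\mathfrak{m},\mathfrak{n}$ of a Leibniz algebra $\mathfrak{g}$, the $\mathrm{Lie}$-commutator $[\mathfrak{m},\mathfrak{n}]_{\mathrm{Lie}}$ is the subspace spanned by all $[m,n]+[n,m]$, $m\in\mathfrak{m}$, $n\in\mathfrak{n}$. The $\mathrm{Lie}$-center is $Z_{\mathrm{Lie}}(\mathfrak{g})=\{z\in\mathfrak{g}: [q,z]+[z,q]=0 \text{ for all } q\in\mathfrak{g}\}$. A surjective homomorphism $f:\mathfrak{g}\to\mathfrak{q}$ is a $\mathrm{Lie}$-central extension if $\ker f\subseteq Z_{\mathrm{Lie}}(\mathfrak{g})$. The lower $\mathrm{Lie}$-central series is $\mathfrak{g}^{[1]}=\mathfrak{g}$,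 $\mathfrak{g}^{[i]}=[\mathfrak{g}^{[i-1]},\mathfrak{g}]_{\mathrm{Lie}}$; $\mathfrak{g}$ is $\mathrm{Lie}$-nilpotent if $\mathfrak{g}^{[k]}=0$ for some $k$. *)

theory Defs
  imports Main
begin

text \<open>A Leibniz algebra over a field 'k, presented on an explicit carrier set
  inside an ambient type 'v (so that quotients, whose elements are cosets,
  can be formed).  Negation is x \<mapsto> (-1)x.\<close>

record ('k, 'v) leibniz_alg =
  carrier :: "'v set"
  add :: "'v \<Rightarrow> 'v \<Rightarrow> 'v"
  zero :: "'v"
  smul :: "'k \<Rightarrow> 'v \<Rightarrow> 'v"
  brk :: "'v \<Rightarrow> 'v \<Rightarrow> 'v"

definition leibniz_algebra :: "('k::field, 'v) leibniz_alg \<Rightarrow> bool" where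
  "leibniz_algebra G \<longleftrightarrow>
     zero G \<in> carrier G \<and>
     (\<forall>x\<in>carrier G. \<forall>y\<in>carrier G. add G x y \<in> carrier G) \<and>
     (\<forall>c. \<forall>x\<in>carrier G. smul G c x \<in> carrier G) \<and>
     (\<forall>x\<in>carrier G. \<forall>y\<in>carrier G. brk G x y \<in> carrier G) \<and>
     (\<forall>x\<in>carrier G. \<forall>y\<in>carrier G. \<forall>z\<in>carrier G. add G (add G x y) z = add G x (add G y z)) \<and>
     (\<forall>x\<in>carrier G. \<forall>y\<in>carrier G. add G x y = add G y x) \<and>
     (\<forall>x\<in>carrier G. add G (zero G) x = x) \<and>
     (\<forall>x\<in>carrier G. add G x (smul G (-1) x) = zero G) \<and>
     (\<forall>x\<in>carrier G. smul G 1 x = x) \<and>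
     (\<forall>a b. \<forall>x\<in>carrier G. smul G a (smul G b x) = smul G (a * b) x) \<and>
     (\<forall>a b. \<forall>x\<in>carrier G. smul G (a + b) x = add G (smul G a x) (smul G b x)) \<and>
     (\<forall>a. \<forall>x\<in>carrier G. \<forall>y\<in>carrier G. smul G a (add G x y) = add G (smul G a x) (smul G a y)) \<and>
     (\<forall>x\<in>carrier G. \<forall>y\<in>carrier G. \<forall>z\<in>carrier G.
        brk G (add G x y) z = add G (brk G x z) (brk G y z) \<and>
        brk G x (add G y z) = add G (brk G x y) (brk G x z)) \<and>
     (\<forall>a. \<forall>x\<in>carrier G. \<forall>y\<in>carrier G.
        brk G (smul G a x) y = smul G a (brk G x y) \<and>
        brk G x (smul G a y) = smul G a (brk G x y)) \<and>
     (\<forall>x\<in>carrier G. \<forall>y\<in>carrier G. \<forall>z\<in>carrier G.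
        brk G x (brk G y z) = add G (brk G (brk G x y) z) (smul G (-1) (brk G (brk G x z) y)))"

definition subspace_of :: "('k::field, 'v) leibniz_alg \<Rightarrow> 'v set \<Rightarrow> bool" where
  "subspace_of G S \<longleftrightarrow> S \<subseteq> carrier G \<and> zero G \<in> S \<and>
     (\<forall>x\<in>S. \<forall>y\<in>S. add G x y \<in> S) \<and> (\<forall>c. \<forall>x\<in>S. smul G c x \<in> S)"

definition two_sided_ideal :: "('k::field, 'v) leibniz_alg \<Rightarrow> 'v set \<Rightarrow> bool" where
  "two_sided_ideal G H \<longleftrightarrow> subspace_of G H \<and>
     (\<forall>x\<in>carrier G. \<forall>h\<in>H. brk G x h \<in> H \<and> brk G h x \<in> H)"

definition lspan :: "('k::field, 'v) leibniz_alg \<Rightarrow> 'v set \<Rightarrow> 'v set" where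
  "lspan G A = \<Inter>{S. subspace_of G S \<and> A \<subseteq> S}"

definition lie_comm :: "('k::field, 'v) leibniz_alg \<Rightarrow> 'v set \<Rightarrow> 'v set \<Rightarrow> 'v set" where
  "lie_comm G M N = lspan G {add G (brk G m n) (brk G n m) | m n. m \<in> M \<and> n \<in> N}"

definition lie_center :: "('k::field, 'v) leibniz_alg \<Rightarrow> 'v set" where
  "lie_center G = {z \<in> carrier G. \<forall>q\<in>carrier G. add G (brk G q z) (brk G z q) = zero G}"

text \<open>lower_lie_series G i is \<open>g^[i+1]\<close>.\<close>
fun lower_lie_series :: "('k::field, 'v) leibniz_alg \<Rightarrow> nat \<Rightarrow> 'v set" where
  "lower_lie_series G 0 = carrier G"
| "lower_lie_series G (Suc i) = lie_comm G (lower_lie_series G i) (carrier G)"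

definition lie_nilpotent :: "('k::field, 'v) leibniz_alg \<Rightarrow> bool" where
  "lie_nilpotent G \<longleftrightarrow> (\<exists>k. lower_lie_series G k = {zero G})"

definition coset :: "('k::field, 'v) leibniz_alg \<Rightarrow> 'v set \<Rightarrow> 'v \<Rightarrow> 'v set" where
  "coset G H x = {add G x h | h. h \<in> H}"

definition quot :: "('k::field, 'v) leibniz_alg \<Rightarrow> 'v set \<Rightarrow> ('k, 'v set) leibniz_alg" where
  "quot G H = \<lparr> carrier = coset G H ` carrier G,
     add = (\<lambda>X Y. coset G H (add G (SOME x. x \<in> X) (SOME y. y \<in> Y))),
     zero = coset G H (zero G),
     smul = (\<lambda>c X. coset G H (smul G c (SOME x. x \<in> X))),
     brk = (\<lambda>X Y. coset G H (brk G (SOME x. x \<in> X) (SOME y. y \<in> Y))) \<rparr>"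

definition leibniz_hom :: "('k::field, 'v) leibniz_alg \<Rightarrow> ('k, 'w) leibniz_alg \<Rightarrow> ('v \<Rightarrow> 'w) \<Rightarrow> bool" where
  "leibniz_hom G Q f \<longleftrightarrow> (\<forall>x\<in>carrier G. f x \<in> carrier Q) \<and>
     (\<forall>x\<in>carrier G. \<forall>y\<in>carrier G. f (add G x y) = add Q (f x) (f y)) \<and>
     (\<forall>c. \<forall>x\<in>carrier G. f (smul G c x) = smul Q c (f x)) \<and>
     (\<forall>x\<in>carrier G. \<forall>y\<in>carrier G. f (brk G x y) = brk Q (f x) (f y))"

definition lie_central_extension :: "('k::field, 'v) leibniz_alg \<Rightarrow> ('k, 'w) leibniz_alg \<Rightarrow> ('v \<Rightarrow> 'w) \<Rightarrow> bool" where
  "lie_central_extension G Q f \<longleftrightarrow> leibniz_hom G Q f \<and> f ` carrier G = carrier Q \<and>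
     {x \<in> carrier G. f x = zero Q} \<subseteq> lie_center G"

end

theory Submission
  imports Defs
begin

context
  fixes G :: "('k::field, 'v) leibniz_alg"
  assumes LA: "leibniz_algebra G"
begin
lemma la_zero: "zero G \<in> carrier G" using LA[unfolded leibniz_algebra_def, THEN conjunct1] by blast
lemma la_add: "x \<in> carrier G \<Longrightarrow> y \<in> carrier G \<Longrightarrow> add G x y \<in> carrier G"
  using LA[unfolded leibniz_algebra_def, THEN conjunct2, THEN conjunct1] by blast
lemma la_smul: "x \<in> carrier G \<Longrightarrow> smul G c x \<in> carrier G"
  using LA[unfolded leibniz_algebra_def, THEN conjunct2, THEN conjunct2, THEN conjunct1] by blast
lemma la_brk: "x \<in> carrier G \<Longrightarrow> y \<in> carrier G \<Longrightarrow> brk G x y \<in> carrier G"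
  using LA[unfolded leibniz_algebra_def, THEN conjunct2, THEN conjunct2, THEN conjunct2, THEN conjunct1] by blast
lemma la_assoc: "x \<in> carrier G \<Longrightarrow> y \<in> carrier G \<Longrightarrow> z \<in> carrier G \<Longrightarrow>
   add G (add G x y) z = add G x (add G y z)"
  using LA[unfolded leibniz_algebra_def, THEN conjunct2, THEN conjunct2, THEN conjunct2, THEN conjunct2, THEN conjunct1] by blast
lemma la_comm: "x \<in> carrier G \<Longrightarrow> y \<in> carrier G \<Longrightarrow> add G x y = add G y x"
  using LA[unfolded leibniz_algebra_def, THEN conjunct2, THEN conjunct2, THEN conjunct2, THEN conjunct2, THEN conjunct2, THEN conjunct1] by blast
lemma la_lzero: "x \<in> carrier G \<Longrightarrow> add G (zero G) x = x"
  using LA[unfolded leibniz_algebra_def, THEN conjunct2, THEN conjunct2, THEN conjunct2, THEN conjunct2, THEN conjunct2, THEN conjunct2, THEN conjunct1] by blast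
lemma la_rzero: "x \<in> carrier G \<Longrightarrow> add G x (zero G) = x"
  using la_lzero la_comm la_zero by metis
lemma la_neg: "x \<in> carrier G \<Longrightarrow> add G x (smul G (-1) x) = zero G"
  using LA[unfolded leibniz_algebra_def, THEN conjunct2, THEN conjunct2, THEN conjunct2, THEN conjunct2, THEN conjunct2, THEN conjunct2, THEN conjunct2, THEN conjunct1] by blast
lemma la_smul_add: "x \<in> carrier G \<Longrightarrow> y \<in> carrier G \<Longrightarrow> smul G a (add G x y) = add G (smul G a x) (smul G a y)"
  using LA[unfolded leibniz_algebra_def, THEN conjunct2, THEN conjunct2, THEN conjunct2, THEN conjunct2, THEN conjunct2, THEN conjunct2, THEN conjunct2, THEN conjunct2, THEN conjunct2, THEN conjunct2, THEN conjunct2, THEN conjunct1] by blast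
lemma la_brk_addl: "x \<in> carrier G \<Longrightarrow> y \<in> carrier G \<Longrightarrow> z \<in> carrier G \<Longrightarrow>
   brk G (add G x y) z = add G (brk G x z) (brk G y z)"
  using LA[unfolded leibniz_algebra_def, THEN conjunct2, THEN conjunct2, THEN conjunct2, THEN conjunct2, THEN conjunct2, THEN conjunct2, THEN conjunct2, THEN conjunct2, THEN conjunct2, THEN conjunct2, THEN conjunct2, THEN conjunct2, THEN conjunct1] by blast
lemma la_brk_addr: "x \<in> carrier G \<Longrightarrow> y \<in> carrier G \<Longrightarrow> z \<in> carrier G \<Longrightarrow>
   brk G x (add G y z) = add G (brk G x y) (brk G x z)"
  using LA[unfolded leibniz_algebra_def, THEN conjunct2, THEN conjunct2, THEN conjunct2, THEN conjunct2, THEN conjunct2, THEN conjunct2, THEN conjunct2, THEN conjunct2, THEN conjunct2, THEN conjunct2, THEN conjunct2, THEN conjunct2, THEN conjunct1] by blast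

lemma la_idem: assumes "x \<in> carrier G" "add G x x = x" shows "x = zero G"
proof -
  have n: "smul G (-1) x \<in> carrier G" using assms la_smul by blast
  have "zero G = add G (add G x x) (smul G (-1) x)" using assms la_neg by simp
  also have "\<dots> = add G x (add G x (smul G (-1) x))" using la_assoc assms n by blast
  also have "\<dots> = x" using la_neg la_rzero assms by simp
  finally show ?thesis by simp
qed

lemma la_smul_zero: "smul G c (zero G) = zero G"
proof -
  have "add G (smul G c (zero G)) (smul G c (zero G)) = smul G c (zero G)"
    using la_smul_add[OF la_zero la_zero, of c] la_lzero[OF la_zero] by simp
  thus ?thesis using la_idem la_smul la_zero by blast
qed

lemma la_carrier_sub: "subspace_of G (carrier G)"
  unfolding subspace_of_def using la_zero la_add la_smul by blast

lemma la_zero_sub: "subspace_of G {zero G}"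
  unfolding subspace_of_def using la_zero la_lzero la_smul_zero by auto
end

lemma subspaceI: "S \<subseteq> carrier G \<Longrightarrow> zero G \<in> S \<Longrightarrow> (\<And>x y. x \<in> S \<Longrightarrow> y \<in> S \<Longrightarrow> add G x y \<in> S)
  \<Longrightarrow> (\<And>c x. x \<in> S \<Longrightarrow> smul G c x \<in> S) \<Longrightarrow> subspace_of G S"
  unfolding subspace_of_def by blast

lemma lspan_sub: assumes T: "subspace_of G T" and AT: "A \<subseteq> T" shows "subspace_of G (lspan G A)"
proof -
  let ?F = "{S. subspace_of G S \<and> A \<subseteq> S}"
  have TF: "T \<in> ?F" using T AT by simp
  have 1: "\<Inter>?F \<subseteq> carrier G" using Inter_lower[OF TF] T unfolding subspace_of_def by (meson order_trans)
  have 2: "zero G \<in> \<Inter>?F" by (rule InterI) (simp add: subspace_of_def)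
  have 3: "add G x y \<in> \<Inter>?F" if "x \<in> \<Inter>?F" "y \<in> \<Inter>?F" for x y
  proof (rule InterI)
    fix S assume "S \<in> ?F"
    then have "x \<in> S" "y \<in> S" "subspace_of G S" using that by auto
    then show "add G x y \<in> S" unfolding subspace_of_def by blast
  qed
  have 4: "smul G c x \<in> \<Inter>?F" if "x \<in> \<Inter>?F" for x c
  proof (rule InterI)
    fix S assume "S \<in> ?F"
    then have "x \<in> S" "subspace_of G S" using that by auto
    then show "smul G c x \<in> S" unfolding subspace_of_def by blast
  qed
  show ?thesis unfolding lspan_def by (rule subspaceI[OF 1 2 3 4])
qed

lemma lspan_least: "subspace_of G S \<Longrightarrow> A \<subseteq> S \<Longrightarrow> lspan G A \<subseteq> S"
  unfolding lspan_def by (rule Inter_lower) simp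

lemma lspan_inc: "A \<subseteq> lspan G A"
  unfolding lspan_def by (rule Inter_greatest) simp

lemma lspan_zero: "zero G \<in> lspan G A"
  unfolding lspan_def subspace_of_def by (rule InterI) simp

lemma series_zero: "zero G \<in> carrier G \<Longrightarrow> zero G \<in> lower_lie_series G k"
  by (cases k) (simp_all add: lie_comm_def lspan_zero)

lemma image_sub:
  assumes h: "leibniz_hom G Q f" and z: "f (zero G) = zero Q" and S: "subspace_of G S"
  shows "subspace_of Q (f ` S)"
proof -
  have SC: "S \<subseteq> carrier G" using S unfolding subspace_of_def by blast
  have 1: "f ` S \<subseteq> carrier Q" using SC h unfolding leibniz_hom_def by blast
  have 2: "zero Q \<in> f ` S" using S z unfolding subspace_of_def by (metis image_eqI)
  have 3: "add Q x y \<in> f ` S" if xy: "x \<in> f ` S" "y \<in> f ` S" for x y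
  proof -
    obtain a b where ab: "a \<in> S" "b \<in> S" "x = f a" "y = f b" using xy by blast
    then have "add Q x y = f (add G a b)" using h SC unfolding leibniz_hom_def by (auto simp: subset_iff)
    moreover have "add G a b \<in> S" using S ab unfolding subspace_of_def by blast
    ultimately show ?thesis by simp
  qed
  have 4: "smul Q c x \<in> f ` S" if xy: "x \<in> f ` S" for x c
  proof -
    obtain a where ab: "a \<in> S" "x = f a" using xy by blast
    then have "smul Q c x = f (smul G c a)" using h SC unfolding leibniz_hom_def by (auto simp: subset_iff)
    moreover have "smul G c a \<in> S" using S ab unfolding subspace_of_def by blast
    ultimately show ?thesis by simp
  qed
  show ?thesis unfolding subspace_of_def using 1 2 3 4 by blast
qed

lemma preimage_sub:
  assumes LA: "leibniz_algebra G" and h: "leibniz_hom G Q f" and z: "f (zero G) = zero Q"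
    and S: "subspace_of Q S"
  shows "subspace_of G {x \<in> carrier G. f x \<in> S}"
proof (rule subspaceI)
  show "{x \<in> carrier G. f x \<in> S} \<subseteq> carrier G" by blast
  show "zero G \<in> {x \<in> carrier G. f x \<in> S}" using la_zero[OF LA] z S unfolding subspace_of_def by simp
  fix x y c assume x: "x \<in> {x \<in> carrier G. f x \<in> S}"
  show "smul G c x \<in> {x \<in> carrier G. f x \<in> S}"
    using x h S la_smul[OF LA] unfolding subspace_of_def leibniz_hom_def by auto
  assume y: "y \<in> {x \<in> carrier G. f x \<in> S}"
  show "add G x y \<in> {x \<in> carrier G. f x \<in> S}"
    using x y h S la_add[OF LA] unfolding subspace_of_def leibniz_hom_def by auto
qed

lemma series_carrier: assumes LA: "leibniz_algebra G" shows "lower_lie_series G k \<subseteq> carrier G"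
proof (induction k)
  case 0 then show ?case by simp
next
  case (Suc k)
  have "{add G (brk G m n) (brk G n m) | m n. m \<in> lower_lie_series G k \<and> n \<in> carrier G}
     \<subseteq> carrier G" using Suc la_add[OF LA] la_brk[OF LA] by blast
  then show ?case unfolding lower_lie_series.simps lie_comm_def
    using lspan_least[OF la_carrier_sub[OF LA]] by blast
qed

lemma series_subsp: assumes LA: "leibniz_algebra G" shows "subspace_of G (lower_lie_series G k)"
proof (cases k)
  case 0 then show ?thesis using la_carrier_sub[OF LA] by simp
next
  case (Suc j)
  have "{add G (brk G m n) (brk G n m) | m n. m \<in> lower_lie_series G j \<and> n \<in> carrier G}
     \<subseteq> carrier G" using series_carrier[OF LA] la_add[OF LA] la_brk[OF LA] by blast
  then show ?thesis unfolding Suc lower_lie_series.simps lie_comm_def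
    using lspan_sub[OF la_carrier_sub[OF LA]] by blast
qed


lemma center_gen: assumes LA: "leibniz_algebra G" and m: "m \<in> lie_center G" and n: "n \<in> carrier G"
  shows "add G (brk G m n) (brk G n m) = zero G"
proof -
  have mc: "m \<in> carrier G" using m unfolding lie_center_def by blast
  have "add G (brk G n m) (brk G m n) = zero G" using m n unfolding lie_center_def by blast
  then show ?thesis using la_comm[OF LA la_brk[OF LA mc n] la_brk[OF LA n mc]] by simp
qed

context
  fixes G :: "('k::field, 'v) leibniz_alg" and Q :: "('k, 'w) leibniz_alg" and f
  assumes LA: "leibniz_algebra G" and h: "leibniz_hom G Q f"
    and su: "f ` carrier G = carrier Q" and z: "f (zero G) = zero Q"
begin

lemma hf_add: "x \<in> carrier G \<Longrightarrow> y \<in> carrier G \<Longrightarrow> f (add G x y) = add Q (f x) (f y)"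
  using h unfolding leibniz_hom_def by blast
lemma hf_brk: "x \<in> carrier G \<Longrightarrow> y \<in> carrier G \<Longrightarrow> f (brk G x y) = brk Q (f x) (f y)"
  using h unfolding leibniz_hom_def by blast

lemma hf_gen: "x \<in> carrier G \<Longrightarrow> y \<in> carrier G \<Longrightarrow>
   f (add G (brk G x y) (brk G y x)) = add Q (brk Q (f x) (f y)) (brk Q (f y) (f x))"
  using hf_add hf_brk la_brk[OF LA] by simp

lemma seriesA: "lower_lie_series Q k \<subseteq> f ` lower_lie_series G k"
proof (induction k)
  case 0 then show ?case using su by simp
next
  case (Suc k)
  let ?gG = "{add G (brk G m n) (brk G n m) | m n. m \<in> lower_lie_series G k \<and> n \<in> carrier G}"
  let ?gQ = "{add Q (brk Q m n) (brk Q n m) | m n. m \<in> lower_lie_series Q k \<and> n \<in> carrier Q}"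
  have g: "?gQ \<subseteq> f ` ?gG"
  proof
    fix x assume "x \<in> ?gQ"
    then obtain m n where mn: "m \<in> lower_lie_series Q k" "n \<in> carrier Q"
      "x = add Q (brk Q m n) (brk Q n m)" by blast
    obtain m' where m': "m' \<in> lower_lie_series G k" "m = f m'" using mn(1) Suc by blast
    obtain n' where n': "n' \<in> carrier G" "n = f n'" using mn(2) su by blast
    have "m' \<in> carrier G" using m'(1) series_carrier[OF LA] by blast
    then have "x = f (add G (brk G m' n') (brk G n' m'))" using hf_gen n' m' mn by simp
    moreover have "add G (brk G m' n') (brk G n' m') \<in> ?gG" using m' n' by blast
    ultimately show "x \<in> f ` ?gG" by blast
  qed
  have "subspace_of Q (f ` lower_lie_series G (Suc k))"
    using image_sub[OF h z series_subsp[OF LA]] by blast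
  moreover have "?gQ \<subseteq> f ` lower_lie_series G (Suc k)"
    using g lspan_inc[of ?gG G] unfolding lower_lie_series.simps lie_comm_def by blast
  ultimately show ?case unfolding lower_lie_series.simps(2)[of Q] lie_comm_def
    using lspan_least by blast
qed

lemma seriesB: "f ` lower_lie_series G k \<subseteq> lower_lie_series Q k"
proof (induction k)
  case 0 then show ?case using su by simp
next
  case (Suc k)
  let ?gG = "{add G (brk G m n) (brk G n m) | m n. m \<in> lower_lie_series G k \<and> n \<in> carrier G}"
  let ?gQ = "{add Q (brk Q m n) (brk Q n m) | m n. m \<in> lower_lie_series Q k \<and> n \<in> carrier Q}"
  have cs: "subspace_of Q (carrier Q)" using image_sub[OF h z la_carrier_sub[OF LA]] su by simp
  have "lower_lie_series Q (Suc k) \<subseteq> carrier Q"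
    using seriesA[of "Suc k"] series_carrier[OF LA, of "Suc k"] su by blast
  have "?gQ \<subseteq> lspan Q ?gQ" by (rule lspan_inc)
  then have gq: "?gQ \<subseteq> lower_lie_series Q (Suc k)" by (simp add: lie_comm_def)
  have "?gQ \<subseteq> carrier Q"
  proof
    fix x assume "x \<in> ?gQ"
    then have "x \<in> lower_lie_series Q (Suc k)" using gq by blast
    then show "x \<in> carrier Q" using seriesA[of "Suc k"] series_carrier[OF LA, of "Suc k"] su by blast
  qed
  then have "subspace_of Q (lower_lie_series Q (Suc k))"
    unfolding lower_lie_series.simps(2)[of Q] lie_comm_def using lspan_sub[OF cs] by blast
  then have P: "subspace_of G {x \<in> carrier G. f x \<in> lower_lie_series Q (Suc k)}"
    using preimage_sub[OF LA h z] by blast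
  have "?gG \<subseteq> {x \<in> carrier G. f x \<in> lower_lie_series Q (Suc k)}"
  proof
    fix x assume "x \<in> ?gG"
    then obtain m n where mn: "m \<in> lower_lie_series G k" "n \<in> carrier G"
      "x = add G (brk G m n) (brk G n m)" by blast
    have mc: "m \<in> carrier G" using mn(1) series_carrier[OF LA] by blast
    have "f x = add Q (brk Q (f m) (f n)) (brk Q (f n) (f m))" using hf_gen mc mn by simp
    moreover have "f m \<in> lower_lie_series Q k" using Suc mn(1) by blast
    moreover have "f n \<in> carrier Q" using su mn(2) by blast
    ultimately have "f x \<in> ?gQ" by blast
    moreover have "x \<in> carrier G" using mc mn la_add[OF LA] la_brk[OF LA] by simp
    ultimately show "x \<in> {x \<in> carrier G. f x \<in> lower_lie_series Q (Suc k)}" using gq by blast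
  qed
  then have "lower_lie_series G (Suc k) \<subseteq> {x \<in> carrier G. f x \<in> lower_lie_series Q (Suc k)}"
    unfolding lower_lie_series.simps(2)[of G] lie_comm_def using lspan_least[OF P] by blast
  then show ?case by blast
qed

lemma nilp_iff:
  assumes ker: "{x \<in> carrier G. f x = zero Q} \<subseteq> lie_center G"
  shows "lie_nilpotent G \<longleftrightarrow> lie_nilpotent Q"
proof
  assume "lie_nilpotent G"
  then obtain k where k: "lower_lie_series G k = {zero G}" unfolding lie_nilpotent_def by blast
  have "lower_lie_series Q k \<subseteq> {zero Q}" using seriesA[of k] k z by simp
  moreover have "zero Q \<in> lower_lie_series Q k"
    using series_zero[of Q k] z la_zero[OF LA] su by (metis image_eqI)
  ultimately show "lie_nilpotent Q" unfolding lie_nilpotent_def by blast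
next
  assume "lie_nilpotent Q"
  then obtain k where k: "lower_lie_series Q k = {zero Q}" unfolding lie_nilpotent_def by blast
  have kc: "lower_lie_series G k \<subseteq> lie_center G"
  proof
    fix x assume x: "x \<in> lower_lie_series G k"
    then have "f x \<in> lower_lie_series Q k" using seriesB[of k] by blast
    then have "f x = zero Q" using k by simp
    moreover have "x \<in> carrier G" using x series_carrier[OF LA] by blast
    ultimately show "x \<in> lie_center G" using ker by blast
  qed
  have "{add G (brk G m n) (brk G n m) | m n. m \<in> lower_lie_series G k \<and> n \<in> carrier G} \<subseteq> {zero G}"
  proof
    fix x assume "x \<in> {add G (brk G m n) (brk G n m) | m n. m \<in> lower_lie_series G k \<and> n \<in> carrier G}"
    then obtain m n where mn: "m \<in> lower_lie_series G k" "n \<in> carrier G"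
      "x = add G (brk G m n) (brk G n m)" by blast
    have "m \<in> lie_center G" using kc mn(1) by blast
    then show "x \<in> {zero G}" using center_gen[OF LA _ mn(2)] mn(3) by simp
  qed
  then have "lower_lie_series G (Suc k) \<subseteq> {zero G}"
    unfolding lower_lie_series.simps(2)[of G] lie_comm_def
    using lspan_least[OF la_zero_sub[OF LA]] by blast
  moreover have "zero G \<in> lower_lie_series G (Suc k)" by (rule series_zero[OF la_zero[OF LA]])
  ultimately show "lie_nilpotent G" unfolding lie_nilpotent_def by blast
qed

end


context
  fixes G :: "('k::field, 'v) leibniz_alg" and H :: "'v set"
  assumes LA: "leibniz_algebra G" and I: "two_sided_ideal G H"
begin

lemma H_car: "H \<subseteq> carrier G" using I unfolding two_sided_ideal_def subspace_of_def by blast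
lemma H_zero: "zero G \<in> H" using I unfolding two_sided_ideal_def subspace_of_def by blast
lemma H_add: "x \<in> H \<Longrightarrow> y \<in> H \<Longrightarrow> add G x y \<in> H"
  using I unfolding two_sided_ideal_def subspace_of_def by blast
lemma H_smul: "x \<in> H \<Longrightarrow> smul G c x \<in> H"
  using I unfolding two_sided_ideal_def subspace_of_def by blast
lemma H_brkl: "x \<in> carrier G \<Longrightarrow> h \<in> H \<Longrightarrow> brk G x h \<in> H"
  using I unfolding two_sided_ideal_def by blast
lemma H_brkr: "x \<in> carrier G \<Longrightarrow> h \<in> H \<Longrightarrow> brk G h x \<in> H"
  using I unfolding two_sided_ideal_def by blast

lemma coset_mem: "x \<in> carrier G \<Longrightarrow> x \<in> coset G H x"
  unfolding coset_def using H_zero la_rzero[OF LA] by (metis (mono_tags, lifting) mem_Collect_eq)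

lemma coset_shift: assumes x: "x \<in> carrier G" and h: "h \<in> H"
  shows "coset G H (add G x h) = coset G H x"
proof
  have hc: "h \<in> carrier G" using h H_car by blast
  show "coset G H (add G x h) \<subseteq> coset G H x"
  proof
    fix y assume "y \<in> coset G H (add G x h)"
    then obtain h' where h': "h' \<in> H" "y = add G (add G x h) h'" unfolding coset_def by blast
    have "y = add G x (add G h h')" using h' la_assoc[OF LA x hc] H_car by blast
    moreover have "add G h h' \<in> H" using H_add h h' by blast
    ultimately show "y \<in> coset G H x" unfolding coset_def by blast
  qed
  show "coset G H x \<subseteq> coset G H (add G x h)"
  proof
    fix y assume "y \<in> coset G H x"
    then obtain h' where h': "h' \<in> H" "y = add G x h'" unfolding coset_def by blast
    have h'c: "h' \<in> carrier G" using h' H_car by blast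
    let ?n = "smul G (-1) h"
    have nH: "?n \<in> H" using H_smul h by blast
    have nc: "?n \<in> carrier G" using nH H_car by blast
    have "add G (add G x h) (add G ?n h') = add G x (add G h (add G ?n h'))"
      using la_assoc[OF LA x hc] la_add[OF LA nc h'c] by blast
    also have "add G h (add G ?n h') = add G (add G h ?n) h'"
      using la_assoc[OF LA hc nc h'c] by simp
    also have "\<dots> = h'" using la_neg[OF LA hc] la_lzero[OF LA h'c] by simp
    finally have "y = add G (add G x h) (add G ?n h')" using h' by simp
    moreover have "add G ?n h' \<in> H" using H_add nH h' by blast
    ultimately show "y \<in> coset G H (add G x h)" unfolding coset_def by blast
  qed
qed

lemma some_rep: assumes x: "x \<in> carrier G"
  obtains h where "h \<in> H" "(SOME a. a \<in> coset G H x) = add G x h"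
proof -
  have "(SOME a. a \<in> coset G H x) \<in> coset G H x" using coset_mem[OF x] by (rule someI)
  then show ?thesis using that unfolding coset_def by blast
qed

lemma pi_hom: "leibniz_hom G (quot G H) (coset G H)"
  unfolding leibniz_hom_def
proof (intro conjI ballI allI)
  fix x assume x: "x \<in> carrier G"
  show "coset G H x \<in> carrier (quot G H)" using x by (simp add: quot_def)
  obtain h1 where h1: "h1 \<in> H" "(SOME a. a \<in> coset G H x) = add G x h1" using some_rep[OF x] by blast
  have h1c: "h1 \<in> carrier G" using h1 H_car by blast
  fix c
  show "coset G H (smul G c x) = smul (quot G H) c (coset G H x)"
  proof -
    have "smul (quot G H) c (coset G H x) = coset G H (smul G c (add G x h1))"
      by (simp add: quot_def h1)
    also have "smul G c (add G x h1) = add G (smul G c x) (smul G c h1)"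
      using la_smul_add[OF LA x h1c] by simp
    also have "coset G H \<dots> = coset G H (smul G c x)"
      using coset_shift[OF la_smul[OF LA x] H_smul[OF h1(1)]] by simp
    finally show ?thesis by simp
  qed
next
  fix x y assume x: "x \<in> carrier G" and y: "y \<in> carrier G"
  obtain h1 where h1: "h1 \<in> H" "(SOME a. a \<in> coset G H x) = add G x h1" using some_rep[OF x] by blast
  obtain h2 where h2: "h2 \<in> H" "(SOME a. a \<in> coset G H y) = add G y h2" using some_rep[OF y] by blast
  have h1c: "h1 \<in> carrier G" using h1 H_car by blast
  have h2c: "h2 \<in> carrier G" using h2 H_car by blast
  have xy: "add G x y \<in> carrier G" using la_add[OF LA x y] .
  show "coset G H (add G x y) = add (quot G H) (coset G H x) (coset G H y)"
  proof -
    have "add (quot G H) (coset G H x) (coset G H y) = coset G H (add G (add G x h1) (add G y h2))"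
      by (simp add: quot_def h1 h2)
    also have "add G (add G x h1) (add G y h2) = add G (add G (add G x y) h1) h2"
    proof -
      have "add G (add G x h1) (add G y h2) = add G (add G (add G x h1) y) h2"
        using la_assoc[OF LA la_add[OF LA x h1c] y h2c] by simp
      also have "add G (add G x h1) y = add G x (add G h1 y)" using la_assoc[OF LA x h1c y] .
      also have "add G h1 y = add G y h1" using la_comm[OF LA h1c y] .
      also have "add G x (add G y h1) = add G (add G x y) h1" using la_assoc[OF LA x y h1c] by simp
      finally show ?thesis .
    qed
    also have "coset G H \<dots> = coset G H (add G x y)"
      using coset_shift[OF la_add[OF LA xy h1c] h2(1)] coset_shift[OF xy h1(1)] by simp
    finally show ?thesis by simp
  qed
  show "coset G H (brk G x y) = brk (quot G H) (coset G H x) (coset G H y)"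
  proof -
    have yc: "add G y h2 \<in> carrier G" using la_add[OF LA y h2c] .
    have "brk (quot G H) (coset G H x) (coset G H y) = coset G H (brk G (add G x h1) (add G y h2))"
      by (simp add: quot_def h1 h2)
    also have "brk G (add G x h1) (add G y h2) = add G (add G (brk G x y) (brk G x h2)) (brk G h1 (add G y h2))"
      using la_brk_addl[OF LA x h1c yc] la_brk_addr[OF LA x y h2c] by simp
    also have "coset G H \<dots> = coset G H (brk G x y)"
      using coset_shift[OF la_add[OF LA la_brk[OF LA x y] la_brk[OF LA x h2c]] H_brkr[OF yc h1(1)]]
        coset_shift[OF la_brk[OF LA x y] H_brkl[OF x h2(1)]] by simp
    finally show ?thesis by simp
  qed
qed

lemma pi_ker: "{x \<in> carrier G. coset G H x = zero (quot G H)} \<subseteq> H"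
proof
  fix x assume "x \<in> {x \<in> carrier G. coset G H x = zero (quot G H)}"
  then have x: "x \<in> carrier G" "coset G H x = coset G H (zero G)" by (auto simp: quot_def)
  then have "x \<in> coset G H (zero G)" using coset_mem by blast
  then obtain h where "h \<in> H" "x = add G (zero G) h" unfolding coset_def by blast
  then show "x \<in> H" using la_lzero[OF LA] H_car by auto
qed

lemma quot_nilp: assumes C: "H \<subseteq> lie_center G" shows "lie_nilpotent G \<longleftrightarrow> lie_nilpotent (quot G H)"
proof -
  have su: "coset G H ` carrier G = carrier (quot G H)" unfolding quot_def by simp
  have z: "coset G H (zero G) = zero (quot G H)" unfolding quot_def by simp
  have k: "{x \<in> carrier G. coset G H x = zero (quot G H)} \<subseteq> lie_center G" using pi_ker C by blast
  show ?thesis by (rule nilp_iff[OF LA pi_hom su z k])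
qed

end

lemma hom_zero: assumes LQ: "leibniz_algebra Q" and LA: "leibniz_algebra G" and h: "leibniz_hom G Q f"
  shows "f (zero G) = zero Q"
proof -
  have zc: "f (zero G) \<in> carrier Q" using h la_zero[OF LA] unfolding leibniz_hom_def by blast
  have "f (zero G) = f (add G (zero G) (zero G))" using la_lzero[OF LA la_zero[OF LA]] by simp
  also have "\<dots> = add Q (f (zero G)) (f (zero G))"
    using h la_zero[OF LA] unfolding leibniz_hom_def by blast
  finally show ?thesis using la_idem[OF LQ zc] by simp
qed

theorem mainTheorem1:
  fixes G :: "('k::field, 'v) leibniz_alg" and H :: "'v set"
  assumes "(2::'k) \<noteq> 0"
    and "leibniz_algebra G"
    and "two_sided_ideal G H"
    and "H \<subseteq> lie_center G"
  shows "(lie_nilpotent G \<longleftrightarrow> lie_nilpotent (quot G H))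
    \<and> (\<forall>(Q::('k, 'w) leibniz_alg) f. leibniz_algebra Q \<and> lie_central_extension G Q f
          \<longrightarrow> (lie_nilpotent G \<longleftrightarrow> lie_nilpotent Q))"
proof (intro conjI allI impI)
  show "lie_nilpotent G \<longleftrightarrow> lie_nilpotent (quot G H)"
    using quot_nilp[OF assms(2) assms(3) assms(4)] .
next
  fix Q :: "('k, 'w) leibniz_alg" and f
  assume a: "leibniz_algebra Q \<and> lie_central_extension G Q f"
  then have h: "leibniz_hom G Q f" and su: "f ` carrier G = carrier Q"
    and k: "{x \<in> carrier G. f x = zero Q} \<subseteq> lie_center G"
    unfolding lie_central_extension_def by blast+
  show "lie_nilpotent G \<longleftrightarrow> lie_nilpotent Q"
    using nilp_iff[OF assms(2) h su hom_zero[OF _ assms(2) h] k] a by blast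
qed

end
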